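(* For every $\mu\in\mathbb{R}$, the Sprott vector field satisfies on $\mathbb{R}^3\setminus\Delta$ $$-0.41\rho-w-\tfrac{\sqrt3}{2}\le d\theta(f_\mu)\le0.41\rho-w-\tfrac{\sqrt3}{2},$$ where $w:=(x+y+z)/\sqrt3$ and $\rho:=\|\mathbf{x}_\perp\|$.
   Context: The Sprott vector field $f_\mu$ on $\mathbb{R}^3$ is $\dot x=y^2-z-\mu x$, $\dot y=z^2-x-\mu y$, $\dot z=x^2-y-\mu z$. $\Delta:=\mathrm{span}\{(1,1,1)\}$; $\mathbf{x}_\perp$ is the orthogonal projection of $\mathbf{x}=(x,y,z)$ onto $\Delta^\perp$, with $\|\mathbf{x}_\perp\|^2=\tfrac23(x^2+y^2+z^2-xy-yz-zx)$; $d\theta:=\frac{1}{\sqrt3}\frac{(z-y)dx+(x-z)dy+(y-x)dz}{\|\mathbf{x}_\perp\|^2}$ on $\mathbb{R}^3\setminus\Delta$. *)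

theory Defs
  imports "HOL-Analysis.Analysis"
begin

definition sprott :: "real \<Rightarrow> real \<times> real \<times> real \<Rightarrow> real \<times> real \<times> real" where
  "sprott \<mu> p = (case p of (x, y, z) \<Rightarrow>
     (y^2 - z - \<mu> * x, z^2 - x - \<mu> * y, x^2 - y - \<mu> * z))"

definition diag :: "(real \<times> real \<times> real) set" where
  "diag = {(t, t, t) | t. True}"

text \<open>Squared norm of the orthogonal projection onto the complement of Delta.\<close>
definition perp_norm_sq :: "real \<times> real \<times> real \<Rightarrow> real" where
  "perp_norm_sq p = (case p of (x, y, z) \<Rightarrow>
     2/3 * (x^2 + y^2 + z^2 - x*y - y*z - z*x))"

definition dtheta :: "real \<times> real \<times> real \<Rightarrow> real \<times> real \<times> real \<Rightarrow> real" where
  "dtheta p v = (case p of (x, y, z) \<Rightarrow> case v of (a, b, c) \<Rightarrow>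
     (1 / sqrt 3) * ((z - y) * a + (x - z) * b + (y - x) * c) / perp_norm_sq p)"

end

theory Submission
  imports Defs
begin

lemma aux:
  fixes a P Q t :: real
  assumes "a * a = 3" "a > 0" "Q > 0"
  shows "(P - 2 * t * Q/3 - Q) / (a * (2/3*Q)) + t / a + a / 2 = a * P / (2*Q)"
proof -
  have "(P - 2 * t * Q/3 - Q) / (a * (2/3*Q)) + t / a + a / 2 = (3*P - 3*Q + a*a*Q)/(2*a*Q)"
    using assms by (simp add: field_simps)
  also have "... = (a*a*P)/(2*a*Q)" using assms(1) by simp
  also have "... = a * P / (2*Q)" using assms by (simp add: field_simps)
  finally show ?thesis .
qed

theorem lemma9:
  fixes \<mu> x y z :: real
  assumes "(x, y, z) \<notin> diag"
  defines "w \<equiv> (x + y + z) / sqrt 3"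
    and "\<rho> \<equiv> sqrt (perp_norm_sq (x, y, z))"
  shows "- 0.41 * \<rho> - w - sqrt 3 / 2 \<le> dtheta (x, y, z) (sprott \<mu> (x, y, z))
       \<and> dtheta (x, y, z) (sprott \<mu> (x, y, z)) \<le> 0.41 * \<rho> - w - sqrt 3 / 2"
proof -
  define Q where "Q = x^2 + y^2 + z^2 - x*y - y*z - z*x"
  define u where "u = x - z"
  define v where "v = y - z"
  define P where "P = u^2* v - (u^3+v^3)/3"
  have Qe: "Q = ((x-y)^2+(y-z)^2+(z-x)^2)/2" unfolding Q_def by (simp add: power2_eq_square algebra_simps)
  have "\<not> (x = y \<and> y = z)" using assms(1) unfolding diag_def by auto
  then have Qp: "Q > 0" unfolding Qe
    by (metis (no_types, lifting) add_nonneg_nonneg add_pos_nonneg add_nonneg_pos divide_pos_pos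
        eq_iff_diff_eq_0 power2_less_0 not_less zero_less_power2 zero_less_numeral)
  have Qu: "Q = u^2 - u* v + v^2" unfolding Q_def u_def v_def by (simp add: power2_eq_square algebra_simps)
  have s3: "sqrt 3 * sqrt 3 = (3::real)" by simp
  have s3p: "sqrt 3 > (0::real)" by simp
  have pn: "perp_norm_sq (x,y,z) = 2/3 * Q" unfolding perp_norm_sq_def Q_def by simp
  define E where "E = dtheta (x, y, z) (sprott \<mu> (x, y, z)) + w + sqrt 3 / 2"
  have num: "(z - y) * (y^2 - z - \<mu>*x) + (x - z) * (z^2 - x - \<mu>*y) + (y - x) * (x^2 - y - \<mu>*z)
      = P - 2*(x+y+z)*Q/3 - Q"
    unfolding P_def Q_def u_def v_def by (simp add: power2_eq_square power3_eq_cube field_simps)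
  have d: "dtheta (x, y, z) (sprott \<mu> (x, y, z)) = (P - 2*(x+y+z)*Q/3 - Q) / (sqrt 3 * (2/3*Q))"
    unfolding dtheta_def sprott_def pn using num by simp
  have Ee: "E = sqrt 3 * P / (2*Q)"
    unfolding E_def d w_def using Qp by (rule aux[OF s3 s3p])
  have key: "4*Q^3 - 27*P^2 = (u^3 + 3*u^2 * v - 6*u * v^2 + v^3)^2"
    unfolding Qu P_def by (simp add: power2_eq_square power3_eq_cube field_simps)
  have PQ: "27*P^2 \<le> 4*Q^3" using key by (metis diff_ge_0_iff_ge zero_le_power2)
  have r2: "\<rho>^2 = 2/3*Q" unfolding \<rho>_def pn using Qp by (simp add: real_sqrt_pow2)
  have rp: "\<rho> \<ge> 0" unfolding \<rho>_def pn using Qp by simp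
  have E2: "E^2 = 3*P^2/(4*Q^2)" unfolding Ee using Qp
    by (simp add: power_divide power_mult_distrib)
  have "E^2 \<le> (0.41*\<rho>)^2"
  proof -
    have Q3: "Q*(Q*Q) > 0" using Qp by simp
    have "3*P^2/(4*Q^2) \<le> 0.1681 * (2/3*Q)"
      using Qp PQ by (simp add: divide_le_eq power2_eq_square power3_eq_cube mult.assoc) (use Q3 in linarith)
    moreover have "(0.41*\<rho>)^2 = 0.1681*(2/3*Q)" unfolding power_mult_distrib r2 by (simp add: power2_eq_square)
    ultimately show ?thesis unfolding E2 by linarith
  qed
  then have "\<bar>E\<bar> \<le> \<bar>0.41*\<rho>\<bar>" by (simp only: abs_le_square_iff)
  then have "\<bar>E\<bar> \<le> 0.41*\<rho>" using rp by simp
  thus ?thesis unfolding E_def by linarith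
qed

end
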